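(* Let $n\geq 2$, $\gamma\geq1$, $\alpha\in\mathbb{R}$, $\beta\in\mathbb{R}$. For $p,q,s\geq 1$ define $$\theta_1=\frac{2(p+\gamma-1)}{\gamma+1-\alpha-2\beta},\qquad \theta_2=\frac{2(q-1)(p+\gamma-1)}{p+\gamma-3},$$ and for $i=1,2$ $$\kappa_i(p,q;s)=\frac{\frac{q}{s}-\frac{q}{\theta_i}}{\frac{q}{s}-\left(\frac12-\frac1n\right)},\qquad f_i(p,q;s)=\frac{\theta_i}{q}\kappa_i(p,q;s)=\frac{\frac{\theta_i}{s}-1}{\frac{q}{s}-\left(\frac12-\frac1n\right)}.$$ Then for all sufficiently large $p>1$: (i) if $\alpha+2\beta<\gamma-1+\frac{2}{n}$, one can choose $q>1$ such that $\kappa_i(p,q;\frac{n}{n-1})\in(0,1)$ and $f_i(p,q;\frac{n}{n-1})<2$ for $i=1,2$; (ii) if $\alpha+2\beta<\gamma-1+\frac{4}{n+2}$, there exists $q>1$ such that $\kappa_i(p,q;2)\in(0,1)$ and $f_i(p,q;2)<2$ for $i=1,2$. *)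

theory Defs
  imports Complex_Main
begin

definition theta1 :: "real \<Rightarrow> real \<Rightarrow> real \<Rightarrow> real \<Rightarrow> real" where
  "theta1 \<gamma> \<alpha> \<beta> p = 2 * (p + \<gamma> - 1) / (\<gamma> + 1 - \<alpha> - 2 * \<beta>)"

definition theta2 :: "real \<Rightarrow> real \<Rightarrow> real \<Rightarrow> real" where
  "theta2 \<gamma> p q = 2 * (q - 1) * (p + \<gamma> - 1) / (p + \<gamma> - 3)"

definition theta :: "nat \<Rightarrow> real \<Rightarrow> real \<Rightarrow> real \<Rightarrow> real \<Rightarrow> real \<Rightarrow> real" where
  "theta i \<gamma> \<alpha> \<beta> p q = (if i = 1 then theta1 \<gamma> \<alpha> \<beta> p else theta2 \<gamma> p q)"

definition kappa :: "nat \<Rightarrow> nat \<Rightarrow> real \<Rightarrow> real \<Rightarrow> real \<Rightarrow> real \<Rightarrow> real \<Rightarrow> real \<Rightarrow> real" where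
  "kappa i n \<gamma> \<alpha> \<beta> p q s =
     (q / s - q / theta i \<gamma> \<alpha> \<beta> p q) / (q / s - (1/2 - 1 / real n))"

definition fexp :: "nat \<Rightarrow> nat \<Rightarrow> real \<Rightarrow> real \<Rightarrow> real \<Rightarrow> real \<Rightarrow> real \<Rightarrow> real \<Rightarrow> real" where
  "fexp i n \<gamma> \<alpha> \<beta> p q s = theta i \<gamma> \<alpha> \<beta> p q / q * kappa i n \<gamma> \<alpha> \<beta> p q s"

end

theory Submission
  imports Defs
begin

lemma ev_lin: "0 < (k::real) \<Longrightarrow> \<forall>\<^sub>F p in at_top. K < k * (p + g)"
proof -
  assume k: "0 < k"
  show ?thesis using eventually_gt_at_top[of "K/k - g"]
  proof (rule eventually_mono)
    fix p assume "K/k - g < p"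
    hence "K/k < p + g" by simp
    thus "K < k * (p + g)" using k by (simp add: field_simps)
  qed
qed

lemma abs_k:
  fixes s q d \<theta> :: real
  assumes "0<s" "0<q" "d < q/s" "s < \<theta>" "d*\<theta> < q" "\<theta> < 2*q + s*(1-2*d)"
  shows "(q/s - q/\<theta>)/(q/s - d) \<in> {0<..<1} \<and> \<theta>/q * ((q/s - q/\<theta>)/(q/s - d)) < 2"
proof -
  have th: "0 < \<theta>" using assms by linarith
  have D: "0 < q/s - d" using assms by simp
  have N: "0 < q/s - q/\<theta>" using assms th by (simp add: frac_less2)
  have N1: "q/s - q/\<theta> < q/s - d" using assms th by (simp add: field_simps)
  have "\<theta>/q * (q/s - q/\<theta>) = \<theta>/s - 1" using assms th by (simp add: field_simps)
  moreover have "\<theta>/s - 1 < 2*(q/s - d)"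
  proof -
    have "(\<theta> - s)/s < (2*q - 2*d*s)/s" using assms by (intro divide_strict_right_mono) (auto simp: algebra_simps)
    thus ?thesis using assms by (simp add: diff_divide_distrib)
  qed
  ultimately have "\<theta>/q * (q/s - q/\<theta>) / (q/s - d) < 2" using D by (simp add: divide_less_eq)
  thus ?thesis using D N N1 by simp
qed

lemma one_s:
  fixes n :: nat and s \<gamma> \<alpha> \<beta> :: real
  assumes n: "n \<ge> 2" and s: "1 \<le> s" "s \<le> 2"
    and c: "\<gamma> + 1 - \<alpha> - 2*\<beta> > 2*real n/(real n+s)"
  shows "\<forall>\<^sub>F p in at_top. \<exists>q::real. q > 1 \<and> (\<forall>i\<in>{1::nat, 2}.
          kappa i n \<gamma> \<alpha> \<beta> p q s \<in> {0<..<1} \<and> fexp i n \<gamma> \<alpha> \<beta> p q s < 2)"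
proof -
  define c where "c = \<gamma> + 1 - \<alpha> - 2*\<beta>"
  define nn where "nn = real n"
  have nn: "nn \<ge> 2" using n unfolding nn_def by simp
  define d where "d = 1/2 - 1/nn"
  have d0: "0 \<le> d" "d < 1/2" using nn unfolding d_def by (auto simp: field_simps)
  have c0: "c > 0" using c s nn unfolding c_def nn_def by (smt (verit) divide_pos_pos of_nat_0_le_iff)
  define a where "a = 1/c"
  define b where "b = (1 + s/nn)/2"
  have ab: "a < b"
  proof -
    have "2*nn/(nn+s) < c" using c unfolding c_def nn_def by simp
    hence "2*nn < c*(nn+s)" using nn s by (simp add: divide_less_eq)
    hence "2 < c*(1+s/nn)" using nn by (simp add: field_simps)
    thus ?thesis unfolding a_def b_def using c0 by (simp add: field_simps)
  qed
  have a0: "a > 0" unfolding a_def using c0 by simp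
  define m where "m = (a+b)/2"
  have m: "a < m" "m < b" "m > 0" using ab a0 unfolding m_def by auto
  have E: "\<forall>\<^sub>F p in at_top. nn < 1 * (p + (\<gamma> - 1)) \<and> 1 + s/2 < m * (p + (\<gamma> - 1))
     \<and> s < (2*a) * (p + (\<gamma> - 1)) \<and> 2*s/nn < (1 + s/nn - 2*m) * (p + (\<gamma> - 1))"
    using ev_lin[of 1] ev_lin[of m] ev_lin[of "2*a"] ev_lin[of "1 + s/nn - 2*m"] m a0
    unfolding b_def by (auto intro!: eventually_conj)
  show ?thesis using E
  proof (rule eventually_mono)
    fix p assume H: "nn < 1 * (p + (\<gamma> - 1)) \<and> 1 + s/2 < m * (p + (\<gamma> - 1))
     \<and> s < (2*a) * (p + (\<gamma> - 1)) \<and> 2*s/nn < (1 + s/nn - 2*m) * (p + (\<gamma> - 1))"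
    define P where "P = p + \<gamma> - 1"
    define q where "q = m * P"
    have HP: "nn < P" "1 + s/2 < q" "s < 2*a*P" "2*s/nn < (1 + s/nn - 2*m) * P"
      using H unfolding P_def q_def by (simp_all add: algebra_simps)
    have P2: "P > 2" using HP nn by linarith
    have q1: "q > 1" using HP s by linarith
    have s0: "0 < s" using s by simp
    have "d*s \<le> d*2" using d0 s by (intro mult_left_mono) auto
    hence dq: "d < q/s" using q1 s d0 by (simp add: field_simps)
    have sd: "s*(1-2*d) = 2*s/nn" unfolding d_def using nn by (simp add: field_simps)
    have t1: "theta1 \<gamma> \<alpha> \<beta> p = 2*a*P" unfolding theta1_def a_def P_def c_def by simp
    have t2: "theta2 \<gamma> p q = 2*(q-1)*P/(P-2)" unfolding theta2_def P_def
      by (simp add: algebra_simps)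
    have i1: "kappa 1 n \<gamma> \<alpha> \<beta> p q s \<in> {0<..<1} \<and> fexp 1 n \<gamma> \<alpha> \<beta> p q s < 2"
    proof -
      have "d*(2*a*P) < q"
      proof -
        have "d*(2*a*P) = (2*d)*(a*P)" by simp
        also have "\<dots> < 1*(a*P)" using d0 a0 P2 by (intro mult_strict_right_mono) auto
        also have "\<dots> < m*P" using m P2 by simp
        finally show ?thesis unfolding q_def .
      qed
      moreover have "2*a*P < 2*q + s*(1-2*d)"
      proof -
        have "a*P < m*P" using m P2 by simp
        moreover have "0 \<le> 2*s/nn" using s nn by simp
        ultimately show ?thesis unfolding sd q_def by linarith
      qed
      moreover have "0 < q" using q1 by simp
      moreover have "s < 2*a*P" using HP by simp
      ultimately have X: "(q/s - q/(2*a*P))/(q/s - d) \<in> {0<..<1} \<and>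
          (2*a*P)/q * ((q/s - q/(2*a*P))/(q/s - d)) < 2"
        using abs_k[OF s0 _ dq, of "2*a*P"] by blast
      have th: "theta 1 \<gamma> \<alpha> \<beta> p q = 2*a*P" by (simp add: theta_def t1)
      have k: "kappa 1 n \<gamma> \<alpha> \<beta> p q s = (q/s - q/(2*a*P))/(q/s - d)"
        unfolding kappa_def th d_def nn_def ..
      have f: "fexp 1 n \<gamma> \<alpha> \<beta> p q s = (2*a*P)/q * ((q/s - q/(2*a*P))/(q/s - d))"
        unfolding fexp_def k th ..
      show ?thesis unfolding k f using X .
    qed
    have i2: "kappa 2 n \<gamma> \<alpha> \<beta> p q s \<in> {0<..<1} \<and> fexp 2 n \<gamma> \<alpha> \<beta> p q s < 2"
    proof -
      have r: "P/(P-2) > 1" using P2 by simp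
      have "s < 2*(q-1)" using HP(2) by (simp add: field_simps)
      also have "\<dots> < 2*(q-1)*(P/(P-2))" using mult_strict_left_mono[OF r, of "2*(q-1)"] q1 by simp
      finally have A: "s < 2*(q-1)*P/(P-2)" by simp
      have "2*d*P \<le> P - 2" unfolding d_def using nn HP by (simp add: field_simps)
      hence "(q-1)*(2*d*P) \<le> (q-1)*(P-2)" using q1 by (intro mult_left_mono) auto
      also have "\<dots> < q*(P-2)" using P2 by simp
      finally have "d*(2*(q-1)*P) < q*(P-2)" by (simp add: algebra_simps)
      hence B: "d*(2*(q-1)*P/(P-2)) < q" using P2 by (simp add: field_simps)
      have e4: "(2*q + 2*s/nn)*(P-2) - 2*(q-1)*P = 2*((1 + s/nn - 2*m)*P - 2*s/nn)"
        unfolding q_def by (simp add: algebra_simps add_divide_distrib diff_divide_distrib)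
      have "0 < (2*q + 2*s/nn)*(P-2) - 2*(q-1)*P"
        unfolding e4 using HP(4) by simp
      hence "2*(q-1)*P < (2*q + 2*s/nn)*(P-2)" by simp
      hence C: "2*(q-1)*P/(P-2) < 2*q + s*(1-2*d)" unfolding sd using P2
        by (simp add: divide_less_eq)
      have X: "(q/s - q/(2*(q-1)*P/(P-2)))/(q/s - d) \<in> {0<..<1} \<and>
          (2*(q-1)*P/(P-2))/q * ((q/s - q/(2*(q-1)*P/(P-2)))/(q/s - d)) < 2"
        using abs_k[OF s0 _ dq A B C] q1 by simp
      have th: "theta 2 \<gamma> \<alpha> \<beta> p q = 2*(q-1)*P/(P-2)" by (simp add: theta_def t2)
      have k: "kappa 2 n \<gamma> \<alpha> \<beta> p q s = (q/s - q/(2*(q-1)*P/(P-2)))/(q/s - d)"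
        unfolding kappa_def th d_def nn_def ..
      have f: "fexp 2 n \<gamma> \<alpha> \<beta> p q s = (2*(q-1)*P/(P-2))/q * ((q/s - q/(2*(q-1)*P/(P-2)))/(q/s - d))"
        unfolding fexp_def k th ..
      show ?thesis unfolding k f using X .
    qed
    show "\<exists>q::real. q > 1 \<and> (\<forall>i\<in>{1::nat, 2}.
          kappa i n \<gamma> \<alpha> \<beta> p q s \<in> {0<..<1} \<and> fexp i n \<gamma> \<alpha> \<beta> p q s < 2)"
      using q1 i1 i2 by auto
  qed
qed
theorem lemma2p3:
  fixes n :: nat and \<gamma> \<alpha> \<beta> :: real
  assumes "n \<ge> 2" and "\<gamma> \<ge> 1"
  shows "\<forall>\<^sub>F p in at_top. p > 1 \<and>
    (\<alpha> + 2 * \<beta> < \<gamma> - 1 + 2 / real n \<longrightarrow>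
       (\<exists>q::real. q > 1 \<and> (\<forall>i\<in>{1::nat, 2}.
          kappa i n \<gamma> \<alpha> \<beta> p q (real n / (real n - 1)) \<in> {0<..<1} \<and>
          fexp i n \<gamma> \<alpha> \<beta> p q (real n / (real n - 1)) < 2))) \<and>
    (\<alpha> + 2 * \<beta> < \<gamma> - 1 + 4 / (real n + 2) \<longrightarrow>
       (\<exists>q::real. q > 1 \<and> (\<forall>i\<in>{1::nat, 2}.
          kappa i n \<gamma> \<alpha> \<beta> p q 2 \<in> {0<..<1} \<and>
          fexp i n \<gamma> \<alpha> \<beta> p q 2 < 2)))"
proof -
  have nn: "real n \<ge> 2" using assms by simp
  have ev1: "\<forall>\<^sub>F p in at_top. (\<alpha> + 2 * \<beta> < \<gamma> - 1 + 2 / real n \<longrightarrow>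
       (\<exists>q::real. q > 1 \<and> (\<forall>i\<in>{1::nat, 2}.
          kappa i n \<gamma> \<alpha> \<beta> p q (real n / (real n - 1)) \<in> {0<..<1} \<and>
          fexp i n \<gamma> \<alpha> \<beta> p q (real n / (real n - 1)) < 2)))"
  proof (cases "\<alpha> + 2 * \<beta> < \<gamma> - 1 + 2 / real n")
    case True
    have n1: "real n - 1 > 0" using nn by simp
    have e1: "real n + real n / (real n - 1) = real n * real n / (real n - 1)"
      using n1 by (simp add: field_simps)
    have e: "2*real n/(real n + real n / (real n - 1)) = 2 - 2/real n"
      unfolding e1 using n1 nn by (simp add: field_simps)
    have s1: "1 \<le> real n / (real n - 1)" using n1 by simp
    have s2: "real n / (real n - 1) \<le> 2" using n1 nn by (simp add: divide_le_eq)
    have "\<forall>\<^sub>F p in at_top. \<exists>q::real. q > 1 \<and> (\<forall>i\<in>{1::nat, 2}.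
          kappa i n \<gamma> \<alpha> \<beta> p q (real n / (real n - 1)) \<in> {0<..<1} \<and>
          fexp i n \<gamma> \<alpha> \<beta> p q (real n / (real n - 1)) < 2)"
      by (rule one_s[OF assms(1) s1 s2]) (use True e in linarith)
    thus ?thesis by (rule eventually_mono) simp
  qed simp
  have ev2: "\<forall>\<^sub>F p in at_top. (\<alpha> + 2 * \<beta> < \<gamma> - 1 + 4 / (real n + 2) \<longrightarrow>
       (\<exists>q::real. q > 1 \<and> (\<forall>i\<in>{1::nat, 2}.
          kappa i n \<gamma> \<alpha> \<beta> p q 2 \<in> {0<..<1} \<and>
          fexp i n \<gamma> \<alpha> \<beta> p q 2 < 2)))"
  proof (cases "\<alpha> + 2 * \<beta> < \<gamma> - 1 + 4 / (real n + 2)")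
    case True
    have e: "2*real n/(real n + 2) = 2 - 4/(real n + 2)" using nn
      by (simp add: field_simps)
    have "\<forall>\<^sub>F p in at_top. \<exists>q::real. q > 1 \<and> (\<forall>i\<in>{1::nat, 2}.
          kappa i n \<gamma> \<alpha> \<beta> p q 2 \<in> {0<..<1} \<and>
          fexp i n \<gamma> \<alpha> \<beta> p q 2 < 2)"
      by (rule one_s[OF assms(1)]) (use True e in auto)
    thus ?thesis by (rule eventually_mono) simp
  qed simp
  show ?thesis using eventually_conj[OF eventually_gt_at_top[of 1] eventually_conj[OF ev1 ev2]]
    by (simp only: conj_assoc)
qed

end
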